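(* Let $H$ be a commutative Hopf algebra over a field $k$ with counit $\varepsilon$, and let $B$ be a Rota-Baxter co-operator on $H$. Then $\varepsilon\circ B=\varepsilon$.
   Context: Sweedler notation $\Delta(x)=x_1\otimes x_2$, iterated as $x_1\otimes x_2\otimes x_3\otimes x_4$. A Rota-Baxter co-operator on a commutative Hopf algebra $(H,S)$ is an algebra map $B:H\to H$ such that for all $x\in H$: $B(x_1)\otimes B(x_2)=B(x)_1\,B\big(B(x)_2S(B(x)_4)\big)\otimes B(x)_3$, where $B(x)_1\otimes B(x)_2\otimes B(x)_3\otimes B(x)_4$ denotes the threefold iterated coproduct of $B(x)$. *)

theory Defs
  imports Main "HOL.Vector_Spaces"
begin

text \<open>Elements of tensor powers of a k-vector space H are represented by formal
sums (lists of elementary tensors).  Two formal sums denote the same element of the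
tensor power iff they agree under every multilinear form H x ... x H -> k
(the canonical map from the tensor power to the dual of the space of multilinear
forms is injective over a field).\<close>

definition bilinear_form :: "('k::field \<Rightarrow> 'h::ab_group_add \<Rightarrow> 'h) \<Rightarrow> ('h \<Rightarrow> 'h \<Rightarrow> 'k) \<Rightarrow> bool" where
  "bilinear_form sc \<beta> \<longleftrightarrow>
     (\<forall>a. Vector_Spaces.linear sc (*) (\<lambda>b. \<beta> a b)) \<and>
     (\<forall>b. Vector_Spaces.linear sc (*) (\<lambda>a. \<beta> a b))"

definition trilinear_form :: "('k::field \<Rightarrow> 'h::ab_group_add \<Rightarrow> 'h) \<Rightarrow> ('h \<Rightarrow> 'h \<Rightarrow> 'h \<Rightarrow> 'k) \<Rightarrow> bool" where
  "trilinear_form sc \<tau> \<longleftrightarrow>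
     (\<forall>b c. Vector_Spaces.linear sc (*) (\<lambda>a. \<tau> a b c)) \<and>
     (\<forall>a c. Vector_Spaces.linear sc (*) (\<lambda>b. \<tau> a b c)) \<and>
     (\<forall>a b. Vector_Spaces.linear sc (*) (\<lambda>c. \<tau> a b c))"

definition tensor2_eq :: "('k::field \<Rightarrow> 'h::ab_group_add \<Rightarrow> 'h) \<Rightarrow> ('h \<times> 'h) list \<Rightarrow> ('h \<times> 'h) list \<Rightarrow> bool" where
  "tensor2_eq sc xs ys \<longleftrightarrow>
     (\<forall>\<beta>. bilinear_form sc \<beta> \<longrightarrow>
        sum_list (map (\<lambda>(a, b). \<beta> a b) xs) = sum_list (map (\<lambda>(a, b). \<beta> a b) ys))"

definition tensor3_eq :: "('k::field \<Rightarrow> 'h::ab_group_add \<Rightarrow> 'h) \<Rightarrow> ('h \<times> 'h \<times> 'h) list \<Rightarrow> ('h \<times> 'h \<times> 'h) list \<Rightarrow> bool" where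
  "tensor3_eq sc xs ys \<longleftrightarrow>
     (\<forall>\<tau>. trilinear_form sc \<tau> \<longrightarrow>
        sum_list (map (\<lambda>(a, b, c). \<tau> a b c) xs) = sum_list (map (\<lambda>(a, b, c). \<tau> a b c) ys))"

text \<open>Threefold iterated coproduct x_1 \<otimes> x_2 \<otimes> x_3 \<otimes> x_4, computed as
(\<Delta> \<otimes> id \<otimes> id)(\<Delta> \<otimes> id)\<Delta> on the chosen representatives.\<close>
definition iter_coprod3 :: "('h \<Rightarrow> ('h \<times> 'h) list) \<Rightarrow> 'h \<Rightarrow> ('h \<times> 'h \<times> 'h \<times> 'h) list" where
  "iter_coprod3 \<Delta> x =
     concat (map (\<lambda>(a, b). concat (map (\<lambda>(c, d). map (\<lambda>(e, f). (e, f, d, b)) (\<Delta> c)) (\<Delta> a))) (\<Delta> x))"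

text \<open>The underlying commutative ring is the
type 'h (class comm_ring_1); scalar multiplication is sc; the coproduct is given by a function
\<Delta> choosing a representative formal sum \<Delta> x = \<Sum> x_1 \<otimes> x_2 of an element of H \<otimes> H;
\<epsilon> is the counit and S the antipode.\<close>
locale comm_hopf_algebra =
  fixes sc :: "'k::field \<Rightarrow> 'h::comm_ring_1 \<Rightarrow> 'h"
    and \<Delta> :: "'h \<Rightarrow> ('h \<times> 'h) list"
    and \<epsilon> :: "'h \<Rightarrow> 'k"
    and S :: "'h \<Rightarrow> 'h"
  assumes vs: "vector_space sc"
    and sc_mult: "\<And>c x y. sc c (x * y) = sc c x * y"
    and coprod_add: "\<And>x y. tensor2_eq sc (\<Delta> (x + y)) (\<Delta> x @ \<Delta> y)"
    and coprod_scale: "\<And>c x. tensor2_eq sc (\<Delta> (sc c x)) (map (\<lambda>(a, b). (sc c a, b)) (\<Delta> x))"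
    and coassoc: "\<And>x. tensor3_eq sc
        (concat (map (\<lambda>(a, b). map (\<lambda>(c, d). (c, d, b)) (\<Delta> a)) (\<Delta> x)))
        (concat (map (\<lambda>(a, b). map (\<lambda>(c, d). (a, c, d)) (\<Delta> b)) (\<Delta> x)))"
    and counit_linear: "Vector_Spaces.linear sc (*) \<epsilon>"
    and counit_left: "\<And>x. sum_list (map (\<lambda>(a, b). sc (\<epsilon> a) b) (\<Delta> x)) = x"
    and counit_right: "\<And>x. sum_list (map (\<lambda>(a, b). sc (\<epsilon> b) a) (\<Delta> x)) = x"
    and coprod_mult: "\<And>x y. tensor2_eq sc (\<Delta> (x * y))
        (concat (map (\<lambda>(a, b). map (\<lambda>(c, d). (a * c, b * d)) (\<Delta> y)) (\<Delta> x)))"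
    and coprod_one: "tensor2_eq sc (\<Delta> 1) [(1, 1)]"
    and counit_mult: "\<And>x y. \<epsilon> (x * y) = \<epsilon> x * \<epsilon> y"
    and counit_one: "\<epsilon> 1 = 1"
    and antipode_linear: "Vector_Spaces.linear sc sc S"
    and antipode_left: "\<And>x. sum_list (map (\<lambda>(a, b). S a * b) (\<Delta> x)) = sc (\<epsilon> x) 1"
    and antipode_right: "\<And>x. sum_list (map (\<lambda>(a, b). a * S b) (\<Delta> x)) = sc (\<epsilon> x) 1"

definition k_algebra_map :: "('k::field \<Rightarrow> 'h::comm_ring_1 \<Rightarrow> 'h) \<Rightarrow> ('h \<Rightarrow> 'h) \<Rightarrow> bool" where
  "k_algebra_map sc B \<longleftrightarrow> Vector_Spaces.linear sc sc B \<and> (\<forall>x y. B (x * y) = B x * B y) \<and> B 1 = 1"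

definition rota_baxter_cooperator ::
  "('k::field \<Rightarrow> 'h::comm_ring_1 \<Rightarrow> 'h) \<Rightarrow> ('h \<Rightarrow> ('h \<times> 'h) list) \<Rightarrow> ('h \<Rightarrow> 'h) \<Rightarrow> ('h \<Rightarrow> 'h) \<Rightarrow> bool" where
  "rota_baxter_cooperator sc \<Delta> S B \<longleftrightarrow> k_algebra_map sc B \<and>
     (\<forall>x. tensor2_eq sc
        (map (\<lambda>(a, b). (B a, B b)) (\<Delta> x))
        (map (\<lambda>(y1, y2, y3, y4). (y1 * B (y2 * S y4), y3)) (iter_coprod3 \<Delta> (B x))))"

end

theory Submission
  imports Defs
begin

lemma vs_field: "vector_space ((*) :: 'k::field \<Rightarrow> 'k \<Rightarrow> 'k)"
  by (simp add: vector_space_def algebra_simps)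

lemma lin_zero:
  assumes "Vector_Spaces.linear s1 s2 g" shows "g 0 = 0"
proof -
  have "g (0 + 0) = g 0 + g 0" using assms unfolding Vector_Spaces.linear_iff by blast
  then show ?thesis by simp
qed

lemma lin_sum_list:
  assumes "Vector_Spaces.linear s1 s2 g"
  shows "g (sum_list (map h xs)) = sum_list (map (\<lambda>x. g (h x)) xs)"
proof (induction xs)
  case Nil then show ?case using lin_zero[OF assms] by simp
next
  case (Cons a xs) then show ?case using assms by (simp add: Vector_Spaces.linear_iff)
qed

lemma sum_list_concat':
  "sum_list (concat xss) = sum_list (map sum_list (xss :: 'a::monoid_add list list))"
  by (induction xss) auto

lemma sum_map_concat:
  "sum_list (map F (concat xss)) = sum_list (map (\<lambda>xs. sum_list (map F xs)) xss)"
  by (induction xss) auto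

lemma sum_list_mult_right:
  "sum_list (map (\<lambda>x. h x * (c::'a::comm_ring_1)) xs) = sum_list (map h xs) * c"
  by (induction xs) (simp_all add: algebra_simps)

lemma sum_list_mult_left:
  "sum_list (map (\<lambda>x. (c::'a::comm_ring_1) * h x) xs) = c * sum_list (map h xs)"
  by (induction xs) (simp_all add: algebra_simps)

lemma lin_mult_const:
  assumes "Vector_Spaces.linear sc ((*) :: 'k::field \<Rightarrow> 'k \<Rightarrow> 'k) g"
  shows "Vector_Spaces.linear sc (*) (\<lambda>b. K * g b)"
  using assms by (simp add: Vector_Spaces.linear_iff algebra_simps)

lemma lin_mult_const2:
  assumes "Vector_Spaces.linear sc ((*) :: 'k::field \<Rightarrow> 'k \<Rightarrow> 'k) g"
  shows "Vector_Spaces.linear sc (*) (\<lambda>b. g b * K)"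
  using assms by (simp add: Vector_Spaces.linear_iff algebra_simps)

lemma bilin:
  assumes "Vector_Spaces.linear sc ((*) :: 'k::field \<Rightarrow> 'k \<Rightarrow> 'k) g"
    and "Vector_Spaces.linear sc (*) h"
  shows "bilinear_form sc (\<lambda>a b. g a * h b)"
  unfolding bilinear_form_def using assms lin_mult_const lin_mult_const2 by blast

lemma trilin:
  assumes "Vector_Spaces.linear sc ((*) :: 'k::field \<Rightarrow> 'k \<Rightarrow> 'k) g"
    and "Vector_Spaces.linear sc (*) h" and "Vector_Spaces.linear sc (*) l"
  shows "trilinear_form sc (\<lambda>a b c. g a * h b * l c)"
proof -
  have 1: "Vector_Spaces.linear sc (*) (\<lambda>b. g a * h b * l c)" for a c
    using lin_mult_const2[OF lin_mult_const[OF assms(2), of "g a"], of "l c"] by simp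
  have 2: "Vector_Spaces.linear sc (*) (\<lambda>a. g a * h b * l c)" for b c
    using lin_mult_const2[OF assms(1), of "h b * l c"] by (simp add: mult.assoc)
  have 3: "Vector_Spaces.linear sc (*) (\<lambda>c. g a * h b * l c)" for a b
    using lin_mult_const[OF assms(3), of "g a * h b"] by simp
  show ?thesis unfolding trilinear_form_def using 1 2 3 by blast
qed

lemma iter_sum:
  "sum_list (map F (iter_coprod3 \<Delta> y)) =
   sum_list (map (\<lambda>(a, b). sum_list (map (\<lambda>(c, d). sum_list (map (\<lambda>(e, g). F (e, g, d, b)) (\<Delta> c))) (\<Delta> a))) (\<Delta> y))"
  unfolding iter_coprod3_def
  by (simp add: sum_map_concat o_def split_def)

context comm_hopf_algebra
begin

lemma lin_split:
  assumes "Vector_Spaces.linear sc s2 g"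
  shows "g (sum_list (map (\<lambda>(a, b). P a b) xs)) = sum_list (map (\<lambda>(a, b). g (P a b)) xs)"
  using assms by (induction xs) (auto simp: Vector_Spaces.linear_iff lin_zero[OF assms])

lemma main:
  fixes f :: "'h \<Rightarrow> 'k"
  assumes lin: "Vector_Spaces.linear sc (*) f"
    and fm: "\<And>x y. f (x * y) = f x * f y"
    and f1: "f 1 = 1"
    and idem: "\<And>x. sum_list (map (\<lambda>(a, b). f a * f b) (\<Delta> x)) = f x"
  shows "f x = \<epsilon> x"
proof -
  have linS: "Vector_Spaces.linear sc (*) (\<lambda>x. f (S x))"
    using Vector_Spaces.linear_compose[OF antipode_linear lin] by (simp add: o_def)
  have fsc: "f (sc c y) = c * f y" for c y using lin by (simp add: Vector_Spaces.linear_iff)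
  have inv: "sum_list (map (\<lambda>(a, b). f a * f (S b)) (\<Delta> y)) = \<epsilon> y" for y
  proof -
    have "sum_list (map (\<lambda>(a, b). f a * f (S b)) (\<Delta> y)) = f (sum_list (map (\<lambda>(a, b). a * S b) (\<Delta> y)))"
      using lin_split[OF lin, of "\<lambda>a b. a * S b"] by (simp add: fm)
    also have "\<dots> = \<epsilon> y" using antipode_right fsc f1 by simp
    finally show ?thesis .
  qed
  have cr: "sum_list (map (\<lambda>(a, b). f a * \<epsilon> b) (\<Delta> y)) = f y" for y
  proof -
    have "f y = f (sum_list (map (\<lambda>(a, b). sc (\<epsilon> b) a) (\<Delta> y)))" using counit_right by simp
    also have "\<dots> = sum_list (map (\<lambda>(a, b). f a * \<epsilon> b) (\<Delta> y))"
      using lin_split[OF lin, of "\<lambda>a b. sc (\<epsilon> b) a"] by (simp add: fsc mult.commute)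
    finally show ?thesis by simp
  qed
  have tri: "trilinear_form sc (\<lambda>a b c. f a * f b * f (S c))"
    using trilin[OF lin lin linS] .
  have ca: "sum_list (map (\<lambda>(a, b, c). f a * f b * f (S c))
        (concat (map (\<lambda>(a, b). map (\<lambda>(c, d). (c, d, b)) (\<Delta> a)) (\<Delta> x)))) =
      sum_list (map (\<lambda>(a, b, c). f a * f b * f (S c))
        (concat (map (\<lambda>(a, b). map (\<lambda>(c, d). (a, c, d)) (\<Delta> b)) (\<Delta> x))))"
    using coassoc[of x] tri unfolding tensor3_eq_def by blast
  have l: "sum_list (map (\<lambda>(a, b, c). f a * f b * f (S c))
        (concat (map (\<lambda>(a, b). map (\<lambda>(c, d). (c, d, b)) (\<Delta> a)) (\<Delta> x))))
     = sum_list (map (\<lambda>(a, b). sum_list (map (\<lambda>(c, d). f c * f d) (\<Delta> a)) * f (S b)) (\<Delta> x))"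
    by (simp add: sum_map_concat o_def split_def sum_list_mult_right)
  have r: "sum_list (map (\<lambda>(a, b, c). f a * f b * f (S c))
        (concat (map (\<lambda>(a, b). map (\<lambda>(c, d). (a, c, d)) (\<Delta> b)) (\<Delta> x))))
     = sum_list (map (\<lambda>(a, b). f a * sum_list (map (\<lambda>(c, d). f c * f (S d)) (\<Delta> b))) (\<Delta> x))"
    by (simp add: sum_map_concat o_def split_def sum_list_mult_left mult.assoc)
  have "f x = sum_list (map (\<lambda>(a, b). f a * \<epsilon> b) (\<Delta> x))" using cr by simp
  also have "\<dots> = sum_list (map (\<lambda>(a, b). f a * sum_list (map (\<lambda>(c, d). f c * f (S d)) (\<Delta> b))) (\<Delta> x))"
    using inv by simp
  also have "\<dots> = sum_list (map (\<lambda>(a, b). sum_list (map (\<lambda>(c, d). f c * f d) (\<Delta> a)) * f (S b)) (\<Delta> x))"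
    using ca l r by simp
  also have "\<dots> = sum_list (map (\<lambda>(a, b). f a * f (S b)) (\<Delta> x))" using idem by simp
  also have "\<dots> = \<epsilon> x" using inv by simp
  finally show ?thesis .
qed

end

theorem proposition3p2:
  fixes sc :: "'k::field \<Rightarrow> 'h::comm_ring_1 \<Rightarrow> 'h"
    and \<Delta> :: "'h \<Rightarrow> ('h \<times> 'h) list"
    and \<epsilon> :: "'h \<Rightarrow> 'k"
    and S B :: "'h \<Rightarrow> 'h"
  assumes "comm_hopf_algebra sc \<Delta> \<epsilon> S"
    and "rota_baxter_cooperator sc \<Delta> S B"
  shows "\<epsilon> \<circ> B = \<epsilon>"
proof
  fix x
  interpret H: comm_hopf_algebra sc \<Delta> \<epsilon> S by fact
  have kB: "k_algebra_map sc B" and rb: "\<And>x. tensor2_eq sc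
        (map (\<lambda>(a, b). (B a, B b)) (\<Delta> x))
        (map (\<lambda>(y1, y2, y3, y4). (y1 * B (y2 * S y4), y3)) (iter_coprod3 \<Delta> (B x)))"
    using assms(2) unfolding rota_baxter_cooperator_def by auto
  have linB: "Vector_Spaces.linear sc sc B" and Bm: "\<And>x y. B (x * y) = B x * B y" and B1: "B 1 = 1"
    using kB unfolding k_algebra_map_def by auto
  define f where "f = (\<lambda>x. \<epsilon> (B x))"
  have lin: "Vector_Spaces.linear sc (*) f"
    using Vector_Spaces.linear_compose[OF linB H.counit_linear] by (simp add: o_def f_def)
  have linS: "Vector_Spaces.linear sc (*) (\<lambda>x. f (S x))"
    using Vector_Spaces.linear_compose[OF H.antipode_linear lin] by (simp add: o_def)
  have fm: "\<And>x y. f (x * y) = f x * f y" by (simp add: f_def Bm H.counit_mult)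
  have f1: "f 1 = 1" by (simp add: f_def B1 H.counit_one)
  have fsc: "f (sc c y) = c * f y" for c y using lin by (simp add: Vector_Spaces.linear_iff)
  have esc: "\<epsilon> (sc c y) = c * \<epsilon> y" for c y using H.counit_linear by (simp add: Vector_Spaces.linear_iff)
  have cl: "sum_list (map (\<lambda>(a, b). \<epsilon> a * f b) (\<Delta> y)) = f y" for y
  proof -
    have "f y = f (sum_list (map (\<lambda>(a, b). sc (\<epsilon> a) b) (\<Delta> y)))" using H.counit_left by simp
    also have "\<dots> = sum_list (map (\<lambda>(a, b). \<epsilon> a * f b) (\<Delta> y))"
      using H.lin_split[OF lin, of "\<lambda>a b. sc (\<epsilon> a) b"] by (simp add: fsc)
    finally show ?thesis by simp
  qed
  have cr: "sum_list (map (\<lambda>(a, b). f a * \<epsilon> b) (\<Delta> y)) = f y" for y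
  proof -
    have "f y = f (sum_list (map (\<lambda>(a, b). sc (\<epsilon> b) a) (\<Delta> y)))" using H.counit_right by simp
    also have "\<dots> = sum_list (map (\<lambda>(a, b). f a * \<epsilon> b) (\<Delta> y))"
      using H.lin_split[OF lin, of "\<lambda>a b. sc (\<epsilon> b) a"] by (simp add: fsc mult.commute)
    finally show ?thesis by simp
  qed
  have inv: "sum_list (map (\<lambda>(a, b). f a * f (S b)) (\<Delta> y)) = \<epsilon> y" for y
  proof -
    have "sum_list (map (\<lambda>(a, b). f a * f (S b)) (\<Delta> y)) = f (sum_list (map (\<lambda>(a, b). a * S b) (\<Delta> y)))"
      using H.lin_split[OF lin, of "\<lambda>a b. a * S b"] by (simp add: fm)
    also have "\<dots> = \<epsilon> y" using H.antipode_right fsc f1 by simp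
    finally show ?thesis .
  qed
  have cl2: "sum_list (map (\<lambda>(a, b). \<epsilon> a * f b * K) (\<Delta> y)) = f y * K" for y K
    using sum_list_mult_right[of "\<lambda>(a, b). \<epsilon> a * f b" K "\<Delta> y"] cl[of y] by (simp add: split_def)
  have cr2: "sum_list (map (\<lambda>(a, b). f a * (\<epsilon> b * K)) (\<Delta> y)) = f y * K" for y K
    using sum_list_mult_right[of "\<lambda>(a, b). f a * \<epsilon> b" K "\<Delta> y"] cr[of y] by (simp add: split_def mult.assoc)
  have idem: "sum_list (map (\<lambda>(a, b). f a * f b) (\<Delta> y)) = f y" for y
  proof -
    have bl: "bilinear_form sc (\<lambda>a b. \<epsilon> a * \<epsilon> b)" using bilin[OF H.counit_linear H.counit_linear] .
    have "sum_list (map (\<lambda>(a, b). f a * f b) (\<Delta> y)) =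
      sum_list (map (\<lambda>(a, b). \<epsilon> a * \<epsilon> b) (map (\<lambda>(a, b). (B a, B b)) (\<Delta> y)))"
      by (simp add: o_def split_def f_def)
    also have "\<dots> = sum_list (map (\<lambda>(a, b). \<epsilon> a * \<epsilon> b)
        (map (\<lambda>(y1, y2, y3, y4). (y1 * B (y2 * S y4), y3)) (iter_coprod3 \<Delta> (B y))))"
      using rb[of y] bl unfolding tensor2_eq_def by blast
    also have "\<dots> = sum_list (map (\<lambda>(a, b). sum_list (map (\<lambda>(c, d). sum_list (map (\<lambda>(e, g).
          (\<epsilon> e * f g) * (\<epsilon> d * f (S b))) (\<Delta> c))) (\<Delta> a))) (\<Delta> (B y)))"
      by (simp add: iter_sum o_def split_def H.counit_mult Bm f_def ac_simps)
    also have "\<dots> = sum_list (map (\<lambda>(a, b). sum_list (map (\<lambda>(c, d).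
          f c * (\<epsilon> d * f (S b))) (\<Delta> a))) (\<Delta> (B y)))"
      by (simp only: cl2)
    also have "\<dots> = sum_list (map (\<lambda>(a, b). f a * f (S b)) (\<Delta> (B y)))"
      by (simp only: cr2)
    also have "\<dots> = f y" using inv by (simp add: f_def)
    finally show ?thesis .
  qed
  have "f x = \<epsilon> x" using H.main[OF lin fm f1 idem] .
  then show "(\<epsilon> \<circ> B) x = \<epsilon> x" by (simp add: f_def)
qed

end
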